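(* Let $G$ be a graph with nonnegative edge costs, distinguished vertices $start$ and $goal$, and let $C^*$ be the cost of a cheapest $start$–$goal$ path. Let $h_F, h_B$ be nonnegative front-to-end heuristics that are admissible and consistent. Fix $W \ge 1$ and a real $\lambda \le W$. Then the algorithm WBAE* (described in the context) is bounded-suboptimal: whenever it returns a solution, its cost is at most $W\cdot C^*$.
   Context: $c(x,y)$ is the cheapest path cost from $x$ to $y$. $h_F(s)$ estimates $c(s,goal)$, $h_B(s)$ estimates $c(start,s)$; admissibility means $h_F(s)\le c(s,goal)$, $h_B(s)\le c(start,s)$ for all $s$; consistency means $h_F(s)\le c(s,s')+h_F(s')$ and $h_B(s')\le c(s,s')+h_B(s)$ for all $s,s'$. WBAE* is a bidirectional best-first search: a forward search from $start$ with open list $\mathrm{OPEN}_F$ and $g_F$-values (costs of discovered paths from $start$), and a backward search from $goal$ with open list $\mathrm{OPEN}_B$ and $g_B$-values (costs of discovered paths to $goal$). For direction $D$ with opposite $\bar D$, a node $n$ in $\mathrm{OPEN}_D$ has priority $b_{W_D}(n) = g_D(n) + W\cdot h_D(n) + \lambda\,(g_D(n) - h_{\bar D}(n))$. An incumbent solution cost $U$ (initially $\infty$) is updated whenever a generated node is matched with the opposite frontier, giving a $start$–$goal$ path of cost lower than $U$. In each iteration a direction $D$ is chosen (e.g. alternating), a node with minimal $b_{W_D}$ in $\mathrm{OPEN}_D$ is expanded, and the lower bound $LB_{WB} = (b_W\mathrm{Min}_F + b_W\mathrm{Min}_B)/2$ is recomputed, where $b_W\mathrm{Min}_D$ is the minimal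 $b_{W_D}$-value in $\mathrm{OPEN}_D$. The algorithm terminates and returns $U$ once $U \le LB_{WB}$ (with $U$ the cost of a path found through a state on both frontiers). *)

theory Defs
  imports Main "HOL-Library.Extended_Real"
begin

definition is_path :: "('v \<times> 'v) set \<Rightarrow> 'v \<Rightarrow> 'v list \<Rightarrow> 'v \<Rightarrow> bool" where
  "is_path E x p y \<longleftrightarrow> p \<noteq> [] \<and> hd p = x \<and> last p = y \<and>
     (\<forall>i. Suc i < length p \<longrightarrow> (p ! i, p ! Suc i) \<in> E)"

definition path_cost :: "('v \<Rightarrow> 'v \<Rightarrow> real) \<Rightarrow> 'v list \<Rightarrow> real" where
  "path_cost w p = (\<Sum>i < length p - 1. w (p ! i) (p ! Suc i))"

definition cheapest :: "('v \<times> 'v) set \<Rightarrow> ('v \<Rightarrow> 'v \<Rightarrow> real) \<Rightarrow> 'v \<Rightarrow> 'v \<Rightarrow> ereal" where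
  "cheapest E w x y = Inf {ereal (path_cost w p) | p. is_path E x p y}"

text \<open>Directions: True = forward (F), False = backward (B).\<close>

record 'v sstate =
  opn :: "bool \<Rightarrow> 'v set"
  cls :: "bool \<Rightarrow> 'v set"
  gv  :: "bool \<Rightarrow> 'v \<Rightarrow> real" \<comment> \<open>g_D (meaningful on OPEN_D \<union> CLOSED_D)\<close>
  ub  :: ereal

definition succs :: "('v \<times> 'v) set \<Rightarrow> bool \<Rightarrow> 'v \<Rightarrow> 'v set" where
  "succs E D n = (if D then {m. (n, m) \<in> E} else {m. (m, n) \<in> E})"

definition ecost :: "('v \<Rightarrow> 'v \<Rightarrow> real) \<Rightarrow> bool \<Rightarrow> 'v \<Rightarrow> 'v \<Rightarrow> real" where
  "ecost w D n m = (if D then w n m else w m n)"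

definition hD :: "('v \<Rightarrow> real) \<Rightarrow> ('v \<Rightarrow> real) \<Rightarrow> bool \<Rightarrow> 'v \<Rightarrow> real" where
  "hD hF hB D = (if D then hF else hB)"

definition bW :: "('v \<Rightarrow> real) \<Rightarrow> ('v \<Rightarrow> real) \<Rightarrow> real \<Rightarrow> real \<Rightarrow> bool \<Rightarrow> 'v sstate \<Rightarrow> 'v \<Rightarrow> real" where
  "bW hF hB W lam D s n =
     gv s D n + W * hD hF hB D n + lam * (gv s D n - hD hF hB (\<not> D) n)"

definition bWMin :: "('v \<Rightarrow> real) \<Rightarrow> ('v \<Rightarrow> real) \<Rightarrow> real \<Rightarrow> real \<Rightarrow> bool \<Rightarrow> 'v sstate \<Rightarrow> ereal" where
  "bWMin hF hB W lam D s = Inf ((\<lambda>n. ereal (bW hF hB W lam D s n)) ` opn s D)"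

definition LB :: "('v \<Rightarrow> real) \<Rightarrow> ('v \<Rightarrow> real) \<Rightarrow> real \<Rightarrow> real \<Rightarrow> 'v sstate \<Rightarrow> ereal" where
  "LB hF hB W lam s = (bWMin hF hB W lam True s + bWMin hF hB W lam False s) / 2"

text \<open>Initial state: start and goal are generated (and matched if they coincide).\<close>
definition init :: "'v \<Rightarrow> 'v \<Rightarrow> 'v sstate" where
  "init start goal =
     \<lparr> opn = (\<lambda>D. if D then {start} else {goal}),
       cls = (\<lambda>D. {}),
       gv = (\<lambda>D v. 0),
       ub = (if start = goal then 0 else \<infinity>) \<rparr>"

definition expand :: "('v \<times> 'v) set \<Rightarrow> ('v \<Rightarrow> 'v \<Rightarrow> real) \<Rightarrow> bool \<Rightarrow> 'v \<Rightarrow> 'v sstate \<Rightarrow> 'v sstate" where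
  "expand E w D n s =
    (let I = {m \<in> succs E D n. m \<notin> opn s D \<union> cls s D \<or> gv s D n + ecost w D n m < gv s D m};
         g' = (\<lambda>m. if m \<in> I then gv s D n + ecost w D n m else gv s D m)
     in s\<lparr> opn := (opn s)(D := (opn s D - {n}) \<union> I),
           cls := (cls s)(D := (cls s D \<union> {n}) - I),
           gv := (gv s)(D := g'),
           ub := min (ub s)
                   (Inf {ereal (g' m + gv s (\<not> D) m) | m. m \<in> succs E D n \<and> m \<in> opn s (\<not> D)}) \<rparr>)"

definition wbae_step :: "('v \<times> 'v) set \<Rightarrow> ('v \<Rightarrow> 'v \<Rightarrow> real) \<Rightarrow> ('v \<Rightarrow> real) \<Rightarrow> ('v \<Rightarrow> real)
    \<Rightarrow> real \<Rightarrow> real \<Rightarrow> 'v sstate \<Rightarrow> 'v sstate \<Rightarrow> bool" where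
  "wbae_step E w hF hB W lam s s' \<longleftrightarrow>
     LB hF hB W lam s < ub s \<and>
     (\<exists>D n. n \<in> opn s D \<and> (\<forall>n' \<in> opn s D. bW hF hB W lam D s n \<le> bW hF hB W lam D s n') \<and>
            s' = expand E w D n s)"

end

theory Submission
  imports Defs
begin

definition Iset :: "('v \<times> 'v) set \<Rightarrow> ('v \<Rightarrow> 'v \<Rightarrow> real) \<Rightarrow> bool \<Rightarrow> 'v \<Rightarrow> 'v sstate \<Rightarrow> 'v set" where
  "Iset E w D n s = {m \<in> succs E D n. m \<notin> opn s D \<union> cls s D \<or> gv s D n + ecost w D n m < gv s D m}"

lemma expand_opn: "opn (expand E w D n s) D' = (if D' = D then (opn s D - {n}) \<union> Iset E w D n s else opn s D')"
  by (simp add: expand_def Iset_def Let_def)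
lemma expand_cls: "cls (expand E w D n s) D' = (if D' = D then (cls s D \<union> {n}) - Iset E w D n s else cls s D')"
  by (simp add: expand_def Iset_def Let_def)
lemma expand_gv: "gv (expand E w D n s) D' m = (if D' = D \<and> m \<in> Iset E w D n s then gv s D n + ecost w D n m else gv s D' m)"
  by (auto simp add: expand_def Iset_def Let_def)
lemma expand_ub_le: "ub (expand E w D n s) \<le> ub s"
  by (simp add: expand_def Let_def)
lemma expand_ub_match: "m \<in> succs E D n \<Longrightarrow> m \<in> opn s (\<not> D) \<Longrightarrow>
   ub (expand E w D n s) \<le> ereal (gv (expand E w D n s) D m + gv s (\<not> D) m)"
proof -
  assume a: "m \<in> succs E D n" "m \<in> opn s (\<not> D)"
  let ?g = "\<lambda>m. if m \<in> Iset E w D n s then gv s D n + ecost w D n m else gv s D m"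
  have e: "ub (expand E w D n s) = min (ub s) (Inf {ereal (?g m + gv s (\<not> D) m) | m. m \<in> succs E D n \<and> m \<in> opn s (\<not> D)})"
    by (simp add: expand_def Let_def Iset_def)
  have "Inf {ereal (?g m + gv s (\<not> D) m) | m. m \<in> succs E D n \<and> m \<in> opn s (\<not> D)} \<le> ereal (?g m + gv s (\<not> D) m)"
    by (rule Inf_lower) (use a in blast)
  then show ?thesis unfolding e expand_gv by (simp add: min.coboundedI2)
qed

abbreviation OC :: "'v sstate \<Rightarrow> bool \<Rightarrow> 'v set" where
  "OC s D \<equiv> opn s D \<union> cls s D"

definition ep :: "'v \<Rightarrow> 'v \<Rightarrow> bool \<Rightarrow> 'v" where
  "ep start goal D = (if D then start else goal)"

definition winv where
  "winv E w hF hB start goal s \<longleftrightarrow>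
    (\<forall>D. \<forall>v \<in> cls s D. \<forall>m \<in> succs E D v. m \<in> OC s D \<and> gv s D m \<le> gv s D v + ecost w D v m)
  \<and> (\<forall>D. ep start goal D \<in> OC s D \<and> gv s D (ep start goal D) \<le> 0)
  \<and> (\<forall>D. \<forall>v \<in> OC s D. hD hF hB (\<not> D) v \<le> gv s D v)
  \<and> (\<forall>D v. v \<in> OC s D \<and> v \<in> OC s (\<not> D) \<longrightarrow> ub s \<le> ereal (gv s D v + gv s (\<not> D) v))"

lemma succs_sym: "m \<in> succs E D n \<longleftrightarrow> n \<in> succs E (\<not> D) m"
  by (simp add: succs_def)
lemma ecost_sym: "ecost w D n m = ecost w (\<not> D) m n"
  by (simp add: ecost_def)

lemma OC_expand: "n \<in> opn s D \<Longrightarrow> OC (expand E w D n s) D = OC s D \<union> Iset E w D n s"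
  by (auto simp: expand_opn expand_cls)
lemma gv_expand_le: "m \<in> OC s D \<Longrightarrow> gv (expand E w D n s) D m \<le> gv s D m"
  by (auto simp: expand_gv Iset_def)

lemma winv_expand:
  assumes winv: "winv E w hF hB start goal s" and nO: "n \<in> opn s D"
    and enn: "\<And>D n m. m \<in> succs E D n \<Longrightarrow> 0 \<le> ecost w D n m"
    and econs: "\<And>D n m. m \<in> succs E D n \<Longrightarrow> hD hF hB (\<not> D) m \<le> hD hF hB (\<not> D) n + ecost w D n m"
  shows "winv E w hF hB start goal (expand E w D n s)"
proof -
  let ?s = "expand E w D n s" and ?I = "Iset E w D n s"
  note I1 = winv[unfolded winv_def, THEN conjunct1]
  note I2 = winv[unfolded winv_def, THEN conjunct2, THEN conjunct1]
  note I3 = winv[unfolded winv_def, THEN conjunct2, THEN conjunct2, THEN conjunct1]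
  note I4 = winv[unfolded winv_def, THEN conjunct2, THEN conjunct2, THEN conjunct2]
  have nI: "n \<notin> ?I"
  proof
    assume "n \<in> ?I"
    then have "n \<in> succs E D n" "gv s D n + ecost w D n n < gv s D n"
      using nO by (auto simp: Iset_def)
    with enn[of n D n] show False by simp
  qed
  have OCD: "OC ?s D = OC s D \<union> ?I" using OC_expand[OF nO] .
  have OCn: "OC ?s (\<not> D) = OC s (\<not> D)" by (simp add: expand_opn expand_cls)
  have gvn: "gv ?s (\<not> D) = gv s (\<not> D)" by (rule ext) (simp add: expand_gv)
  have gvI: "m \<in> ?I \<Longrightarrow> gv ?s D m = gv s D n + ecost w D n m" for m by (simp add: expand_gv)
  have gvnI: "m \<notin> ?I \<Longrightarrow> gv ?s D m = gv s D m" for m by (simp add: expand_gv)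
  have J1: "\<forall>v \<in> cls ?s D'. \<forall>m \<in> succs E D' v. m \<in> OC ?s D' \<and> gv ?s D' m \<le> gv ?s D' v + ecost w D' v m" for D'
  proof (cases "D' = D")
    case False
    then have "D' = (\<not> D)" by auto
    then show ?thesis using I1 OCn gvn by (simp add: expand_cls)
  next
    case True
    show ?thesis
    proof (intro ballI)
      fix v m assume v: "v \<in> cls ?s D'" and m: "m \<in> succs E D' v"
      have gvv: "gv ?s D v = gv s D v" using v True by (simp add: expand_cls gvnI)
      show "m \<in> OC ?s D' \<and> gv ?s D' m \<le> gv ?s D' v + ecost w D' v m"
      proof (cases "v = n")
        case True
        show ?thesis
        proof (cases "m \<in> ?I")
          case True then show ?thesis using `D' = D` `v = n` gvv OCD by (simp add: gvI)
        next
          case False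
          then have "m \<in> OC s D" "\<not> gv s D n + ecost w D n m < gv s D m"
            using m `D' = D` `v = n` by (auto simp: Iset_def)
          then show ?thesis using `D' = D` `v = n` gvv OCD False by (simp add: gvnI)
        qed
      next
        case False
        then have "v \<in> cls s D" using v True by (simp add: expand_cls)
        with I1 m True have "m \<in> OC s D" "gv s D m \<le> gv s D v + ecost w D v m" by auto
        then show ?thesis using True gvv OCD gv_expand_le[of m s D E w n] by auto
      qed
    qed
  qed
  have J2: "ep start goal D' \<in> OC ?s D' \<and> gv ?s D' (ep start goal D') \<le> 0" for D'
  proof (cases "D' = D")
    case True
    then show ?thesis using I2 OCD gv_expand_le[of "ep start goal D" s D E w n] by force
  next
    case False
    then have "D' = (\<not> D)" by auto
    then show ?thesis using I2 OCn gvn by simp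
  qed
  have J3: "\<forall>v \<in> OC ?s D'. hD hF hB (\<not> D') v \<le> gv ?s D' v" for D'
  proof (cases "D' = D")
    case True
    show ?thesis
    proof
      fix v assume v: "v \<in> OC ?s D'"
      show "hD hF hB (\<not> D') v \<le> gv ?s D' v"
      proof (cases "v \<in> ?I")
        case True
        have "v \<in> succs E D n" using True by (simp add: Iset_def)
        from econs[OF this] I3 nO have "hD hF hB (\<not> D) v \<le> gv s D n + ecost w D n v" by force
        then show ?thesis using True `D' = D` gvI by simp
      next
        case False
        then show ?thesis using v `D' = D` OCD I3 gvnI by auto
      qed
    qed
  next
    case False
    then have "D' = (\<not> D)" by auto
    have "\<forall>v\<in>OC s (\<not> D). hD hF hB (\<not> \<not> D) v \<le> gv s (\<not> D) v" using I3 by blast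
    then show ?thesis using `D' = (\<not> D)` OCn gvn by simp
  qed
  have K: "ub ?s \<le> ereal (gv ?s D v + gv ?s (\<not> D) v)" if v1: "v \<in> OC ?s D" and v2: "v \<in> OC ?s (\<not> D)" for v
  proof (cases "v \<in> ?I")
    case True
    have vs: "v \<in> succs E D n" using True by (simp add: Iset_def)
    have v2': "v \<in> OC s (\<not> D)" using v2 OCn by simp
    show ?thesis
    proof (cases "v \<in> opn s (\<not> D)")
      case True
      then show ?thesis using expand_ub_match[OF vs True, of w] gvn by simp
    next
      case False
      then have vc: "v \<in> cls s (\<not> D)" using v2' by auto
      have ns: "n \<in> succs E (\<not> D) v" using vs succs_sym by metis
      from I1 vc ns have "n \<in> OC s (\<not> D)" and gn: "gv s (\<not> D) n \<le> gv s (\<not> D) v + ecost w (\<not> D) v n" by auto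
      with I4 nO have "ub s \<le> ereal (gv s D n + gv s (\<not> D) n)" by auto
      also have "\<dots> \<le> ereal (gv s D n + ecost w D n v + gv s (\<not> D) v)"
        using gn ecost_sym[of w D n v] by simp
      finally show ?thesis using expand_ub_le[of E w D n s] gvI[OF True] gvn by simp
    qed
  next
    case False
    then have "v \<in> OC s D" using v1 OCD by auto
    moreover have "v \<in> OC s (\<not> D)" using v2 OCn by simp
    ultimately have "ub s \<le> ereal (gv s D v + gv s (\<not> D) v)" using I4 by blast
    then show ?thesis using expand_ub_le[of E w D n s] gvnI[OF False] gvn by simp
  qed
  have J4: "ub ?s \<le> ereal (gv ?s D' v + gv ?s (\<not> D') v)" if "v \<in> OC ?s D'" "v \<in> OC ?s (\<not> D')" for D' v
  proof (cases "D' = D")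
    case True then show ?thesis using K that by simp
  next
    case False
    then have "D' = (\<not> D)" by auto
    then show ?thesis using K[of v] that by (simp add: add.commute)
  qed
  show ?thesis unfolding winv_def using J1 J2 J3 J4 by blast
qed

lemma winv_init:
  assumes "hF goal \<le> 0" "hB start \<le> 0"
  shows "winv E w hF hB start goal (init start goal)"
  using assms unfolding winv_def init_def ep_def by (auto simp: hD_def)

definition pc :: "('v \<Rightarrow> 'v \<Rightarrow> real) \<Rightarrow> 'v list \<Rightarrow> nat \<Rightarrow> real" where
  "pc w p i = (\<Sum>l<i. w (p ! l) (p ! Suc l))"

lemma pc_Suc: "pc w p (Suc i) = pc w p i + w (p ! i) (p ! Suc i)"
  by (simp add: pc_def)

lemma pc_mono:
  assumes "\<And>l. l < k \<Longrightarrow> 0 \<le> w (p ! l) (p ! Suc l)" "i \<le> k"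
  shows "pc w p i \<le> pc w p k"
  using assms
proof (induction k)
  case 0 then show ?case by simp
next
  case (Suc k)
  show ?case
  proof (cases "i = Suc k")
    case False
    then have "pc w p i \<le> pc w p k" using Suc by auto
    moreover have "0 \<le> w (p ! k) (p ! Suc k)" using Suc by auto
    ultimately show ?thesis by (simp add: pc_Suc)
  qed simp
qed

lemma arith_bound:
  fixes g g' hFn hBn hFm hBm dj dk c W lam :: real
  assumes "hBn \<le> g" "g \<le> dj" "hFm \<le> g'" "g' \<le> c - dk"
    "hFn \<le> dk - dj + hFm" "hBm \<le> dk - dj + hBn" "hFm \<le> c - dk" "hBn \<le> dj"
    "0 \<le> dj" "dj \<le> dk" "dk \<le> c" "0 \<le> hFm" "0 \<le> hBn" "1 \<le> W" "lam \<le> W"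
  shows "g + W * hFn + lam * (g - hBn) + (g' + W * hBm + lam * (g' - hFm)) \<le> 2 * W * c"
proof -
  have a1: "W * hFn \<le> W * (dk - dj + hFm)" using assms by (intro mult_left_mono) auto
  have a2: "W * hBm \<le> W * (dk - dj + hBn)" using assms by (intro mult_left_mono) auto
  have a3: "(W - 1) * (c - (dk - dj)) \<ge> 0" using assms by (intro mult_nonneg_nonneg) auto
  show ?thesis
  proof (cases "0 \<le> lam")
    case True
    have b1: "lam * (g - hBn) \<le> lam * (dj - hBn)" using assms True by (intro mult_left_mono) auto
    have b2: "lam * (g' - hFm) \<le> lam * (c - dk - hFm)" using assms True by (intro mult_left_mono) auto
    have b3: "(W - lam) * (hFm + hBn) \<le> (W - lam) * (c - (dk - dj))" using assms by (intro mult_left_mono) auto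
    show ?thesis using a1 a2 a3 b1 b2 b3 assms by (simp add: algebra_simps)
  next
    case False
    have b1: "lam * (g - hBn) \<le> 0" using assms False by (intro mult_nonpos_nonneg) auto
    have b2: "lam * (g' - hFm) \<le> 0" using assms False by (intro mult_nonpos_nonneg) auto
    have b3: "W * (hFm + hBn) \<le> W * (c - (dk - dj))" using assms by (intro mult_left_mono) auto
    show ?thesis using a1 a2 a3 b1 b2 b3 assms by (simp add: algebra_simps)
  qed
qed

lemma main_bound:
  assumes winv: "winv E w hF hB start goal s"
    and path: "is_path E start p goal"
    and wnn: "\<forall>(x, y) \<in> E. 0 \<le> w x y"
    and hFnn: "\<forall>v. 0 \<le> hF v" and hBnn: "\<forall>v. 0 \<le> hB v"
    and hF0: "hF goal \<le> 0" and hB0: "hB start \<le> 0"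
    and cF: "\<And>x y. (x, y) \<in> E \<Longrightarrow> hF x \<le> w x y + hF y"
    and cB: "\<And>x y. (x, y) \<in> E \<Longrightarrow> hB y \<le> w x y + hB x"
    and W1: "1 \<le> W" and lamW: "lam \<le> W"
    and stop: "ub s \<le> LB hF hB W lam s"
  shows "ub s \<le> ereal (W * path_cost w p)"
proof -
  note I1 = winv[unfolded winv_def, THEN conjunct1]
  note I3 = winv[unfolded winv_def, THEN conjunct2, THEN conjunct2, THEN conjunct1]
  note I4 = winv[unfolded winv_def, THEN conjunct2, THEN conjunct2, THEN conjunct2]
  define N where "N = length p - 1"
  define d where "d = pc w p"
  define c where "c = d N"
  have pne: "p \<noteq> []" using path by (simp add: is_path_def)
  have pcost: "path_cost w p = c" by (simp add: path_cost_def c_def d_def pc_def N_def)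
  have edge: "i < N \<Longrightarrow> (p ! i, p ! Suc i) \<in> E" for i
    using path by (auto simp: is_path_def N_def)
  have wpos: "i < N \<Longrightarrow> 0 \<le> w (p ! i) (p ! Suc i)" for i using edge[of i] wnn by auto
  have p0: "p ! 0 = start" using path pne by (simp add: is_path_def hd_conv_nth)
  have pN: "p ! N = goal" using path pne by (simp add: is_path_def last_conv_nth N_def)
  have dSuc: "d (Suc i) = d i + w (p ! i) (p ! Suc i)" for i by (simp add: d_def pc_Suc)
  have dmono: "i \<le> k \<Longrightarrow> k \<le> N \<Longrightarrow> d i \<le> d k" for i k
    unfolding d_def by (rule pc_mono) (auto intro: wpos)
  have d0: "d 0 = 0" by (simp add: d_def pc_def)
  have c0: "0 \<le> c" using dmono[of 0 N] d0 by (simp add: c_def)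
  have F1: "i \<le> N \<Longrightarrow> (\<forall>l<i. p ! l \<in> cls s True) \<Longrightarrow> p ! i \<in> OC s True \<and> gv s True (p ! i) \<le> d i" for i
  proof (induction i)
    case 0
    then show ?case using winv p0 d0 unfolding winv_def ep_def by (metis (full_types))
  next
    case (Suc i)
    then have IH: "p ! i \<in> OC s True" "gv s True (p ! i) \<le> d i" by auto
    have ci: "p ! i \<in> cls s True" using Suc by auto
    have "p ! Suc i \<in> succs E True (p ! i)" using edge[of i] Suc by (simp add: succs_def)
    with I1 ci have "p ! Suc i \<in> OC s True \<and> gv s True (p ! Suc i) \<le> gv s True (p ! i) + ecost w True (p ! i) (p ! Suc i)"
      by blast
    then show ?case using IH dSuc[of i] by (simp add: ecost_def)
  qed
  have B1': "\<forall>i. i + r = N \<longrightarrow> (\<forall>l. i < l \<and> l \<le> N \<longrightarrow> p ! l \<in> cls s False) \<longrightarrow> p ! i \<in> OC s False \<and> gv s False (p ! i) \<le> c - d i" for r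
  proof (induction r)
    case 0
    then show ?case using winv pN unfolding winv_def ep_def c_def by (metis (full_types) add_0_right diff_self)
  next
    case (Suc r)
    show ?case
    proof (intro allI impI)
      fix i assume a: "i + Suc r = N" "\<forall>l. i < l \<and> l \<le> N \<longrightarrow> p ! l \<in> cls s False"
      then have "Suc i + r = N" by simp
      moreover have "\<forall>l. Suc i < l \<and> l \<le> N \<longrightarrow> p ! l \<in> cls s False" using a by auto
      ultimately have IH: "p ! Suc i \<in> OC s False" "gv s False (p ! Suc i) \<le> c - d (Suc i)" using Suc by blast+
      have ci: "p ! Suc i \<in> cls s False" using a by auto
      have "p ! i \<in> succs E False (p ! Suc i)" using edge[of i] a by (simp add: succs_def)
      with I1 ci have "p ! i \<in> OC s False \<and> gv s False (p ! i) \<le> gv s False (p ! Suc i) + ecost w False (p ! Suc i) (p ! i)"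
        by blast
      then show "p ! i \<in> OC s False \<and> gv s False (p ! i) \<le> c - d i" using IH dSuc[of i] by (simp add: ecost_def)
    qed
  qed
  have B1: "i \<le> N \<Longrightarrow> (\<forall>l. i < l \<and> l \<le> N \<longrightarrow> p ! l \<in> cls s False) \<Longrightarrow> p ! i \<in> OC s False \<and> gv s False (p ! i) \<le> c - d i" for i
    using B1'[of "N - i"] by auto
  have hFc: "i \<le> k \<Longrightarrow> k \<le> N \<Longrightarrow> hF (p ! i) \<le> d k - d i + hF (p ! k)" for i k
  proof (induction k)
    case 0 then show ?case by simp
  next
    case (Suc k)
    show ?case
    proof (cases "i = Suc k")
      case False
      then have "hF (p ! i) \<le> d k - d i + hF (p ! k)" using Suc by auto
      moreover have "hF (p ! k) \<le> w (p ! k) (p ! Suc k) + hF (p ! Suc k)" using cF edge Suc by auto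
      ultimately show ?thesis using dSuc[of k] by simp
    qed simp
  qed
  have hBc: "i \<le> k \<Longrightarrow> k \<le> N \<Longrightarrow> hB (p ! k) \<le> d k - d i + hB (p ! i)" for i k
  proof (induction k)
    case 0 then show ?case by simp
  next
    case (Suc k)
    show ?case
    proof (cases "i = Suc k")
      case False
      then have "hB (p ! k) \<le> d k - d i + hB (p ! i)" using Suc by auto
      moreover have "hB (p ! Suc k) \<le> w (p ! k) (p ! Suc k) + hB (p ! k)" using cB edge Suc by auto
      ultimately show ?thesis using dSuc[of k] by simp
    qed simp
  qed
  have cW: "c \<le> W * c" using c0 W1 by (simp add: mult_right_mono[of 1 W c, simplified])
  show ?thesis
  proof (cases "\<exists>i \<le> N. (\<forall>l<i. p ! l \<in> cls s True) \<and> (\<forall>l. i < l \<and> l \<le> N \<longrightarrow> p ! l \<in> cls s False)")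
    case True
    then obtain i where i: "i \<le> N" "\<forall>l<i. p ! l \<in> cls s True" "\<forall>l. i < l \<and> l \<le> N \<longrightarrow> p ! l \<in> cls s False"
      by blast
    from F1[OF i(1,2)] B1[OF i(1,3)]
    have "p ! i \<in> OC s True" "p ! i \<in> OC s False" "gv s True (p ! i) \<le> d i" "gv s False (p ! i) \<le> c - d i"
      by auto
    with spec[OF spec[OF I4, of True], of "p ! i"] have "ub s \<le> ereal (gv s True (p ! i) + gv s False (p ! i))" by simp
    also have "\<dots> \<le> ereal c" using \<open>gv s True (p ! i) \<le> d i\<close> \<open>gv s False (p ! i) \<le> c - d i\<close> by simp
    also have "\<dots> \<le> ereal (W * path_cost w p)" using cW pcost by simp
    finally show ?thesis .
  next
    case False
    note nocross = False
    define Pj where "Pj = (\<lambda>j. j \<le> N \<and> p ! j \<notin> cls s True)"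
    define Pk where "Pk = (\<lambda>k. k \<le> N \<and> p ! k \<notin> cls s False)"
    have exj: "\<exists>j. Pj j"
    proof (rule ccontr)
      assume "\<not> (\<exists>j. Pj j)"
      then have "\<forall>l<N. p ! l \<in> cls s True" by (auto simp: Pj_def)
      then show False using nocross by auto
    qed
    have exk: "\<exists>k. Pk k"
    proof (rule ccontr)
      assume "\<not> (\<exists>k. Pk k)"
      then have "\<forall>l. 0 < l \<and> l \<le> N \<longrightarrow> p ! l \<in> cls s False" by (auto simp: Pk_def)
      then show False using nocross by auto
    qed
    define j where "j = (LEAST j. Pj j)"
    define k where "k = (GREATEST k. Pk k)"
    have Pjj: "Pj j" unfolding j_def using exj by (rule LeastI_ex)
    have jmin: "l < j \<Longrightarrow> p ! l \<in> cls s True" for l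
    proof -
      assume "l < j"
      then have "\<not> Pj l" unfolding j_def by (rule not_less_Least)
      moreover have "l \<le> N" using \<open>l < j\<close> Pjj by (simp add: Pj_def)
      ultimately show ?thesis by (simp add: Pj_def)
    qed
    have bnd: "\<And>y. Pk y \<Longrightarrow> y \<le> N" by (simp add: Pk_def)
    have Pkk: "Pk k" unfolding k_def using exk bnd by (rule GreatestI_ex_nat)
    have kmax: "k < l \<Longrightarrow> l \<le> N \<Longrightarrow> p ! l \<in> cls s False" for l
    proof (rule ccontr)
      assume "k < l" "l \<le> N" "p ! l \<notin> cls s False"
      then have "Pk l" by (simp add: Pk_def)
      then have "l \<le> k" unfolding k_def using bnd by (rule Greatest_le_nat) blast
      with \<open>k < l\<close> show False by simp
    qed
    have jk: "j \<le> k"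
    proof (rule ccontr)
      assume "\<not> j \<le> k"
      then have "k \<le> N \<and> (\<forall>l<k. p ! l \<in> cls s True) \<and> (\<forall>l. k < l \<and> l \<le> N \<longrightarrow> p ! l \<in> cls s False)"
        using Pkk jmin kmax by (auto simp: Pk_def)
      then show False using nocross by blast
    qed
    have jN: "j \<le> N" and kN: "k \<le> N" using Pjj Pkk by (auto simp: Pj_def Pk_def)
    from F1[OF jN] jmin have Fj: "p ! j \<in> OC s True" "gv s True (p ! j) \<le> d j" by auto
    from B1[OF kN] kmax have Bk: "p ! k \<in> OC s False" "gv s False (p ! k) \<le> c - d k" by auto
    have oj: "p ! j \<in> opn s True" using Fj Pjj by (auto simp: Pj_def)
    have ok: "p ! k \<in> opn s False" using Bk Pkk by (auto simp: Pk_def)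
    have gj: "hB (p ! j) \<le> gv s True (p ! j)" using spec[OF I3, of True] Fj by (simp add: hD_def)
    have gk: "hF (p ! k) \<le> gv s False (p ! k)" using spec[OF I3, of False] Bk by (simp add: hD_def)
    define bF where "bF = bW hF hB W lam True s (p ! j)"
    define bB where "bB = bW hF hB W lam False s (p ! k)"
    have mF: "bWMin hF hB W lam True s \<le> ereal bF"
      unfolding bWMin_def bF_def by (rule Inf_lower) (use oj in blast)
    have mB: "bWMin hF hB W lam False s \<le> ereal bB"
      unfolding bWMin_def bB_def by (rule Inf_lower) (use ok in blast)
    have hFjk: "hF (p ! j) \<le> d k - d j + hF (p ! k)" using hFc jk kN by blast
    have hBjk: "hB (p ! k) \<le> d k - d j + hB (p ! j)" using hBc jk kN by blast
    have hFk: "hF (p ! k) \<le> c - d k" using hFc[of k N] kN pN hF0 by (simp add: c_def)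
    have hBj: "hB (p ! j) \<le> d j" using hBc[of 0 j] jN p0 hB0 d0 by simp
    have sum: "bF + bB \<le> 2 * W * c"
      unfolding bF_def bB_def bW_def hD_def
      apply simp
      apply (rule arith_bound)
      using gj Fj gk Bk hFjk hBjk hFk hBj d0 dmono[of 0 j] dmono[OF jk kN] dmono[of k N] jN kN hFnn hBnn W1 lamW
      by (auto simp: c_def)
    have "ub s \<le> LB hF hB W lam s" by (rule stop)
    also have "\<dots> \<le> (ereal bF + ereal bB) / 2"
      unfolding LB_def by (rule ereal_divide_right_mono) (use add_mono[OF mF mB] in auto)
    also have "\<dots> = ereal ((bF + bB) / 2)" by simp
    also have "\<dots> \<le> ereal (W * path_cost w p)" using sum pcost by simp
    finally show ?thesis .
  qed
qed

lemma cheapest_refl: "cheapest E w x x \<le> 0"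
proof -
  have "is_path E x [x] x" by (simp add: is_path_def)
  then have "cheapest E w x x \<le> ereal (path_cost w [x])"
    unfolding cheapest_def by (intro Inf_lower) blast
  then show ?thesis by (simp add: path_cost_def zero_ereal_def)
qed

lemma cheapest_edge: "(x, y) \<in> E \<Longrightarrow> cheapest E w x y \<le> ereal (w x y)"
proof -
  assume e: "(x, y) \<in> E"
  have "is_path E x [x, y] y" using e by (auto simp: is_path_def nth_Cons split: nat.splits)
  then have "cheapest E w x y \<le> ereal (path_cost w [x, y])"
    unfolding cheapest_def by (intro Inf_lower) blast
  then show ?thesis by (simp add: path_cost_def)
qed

theorem theorem2:
  fixes E :: "('v \<times> 'v) set" and w :: "'v \<Rightarrow> 'v \<Rightarrow> real"
    and start goal :: 'v and hF hB :: "'v \<Rightarrow> real" and W lam :: real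
    and s :: "'v sstate"
  assumes finE: "finite E"
    and wnn: "\<forall>(x, y) \<in> E. 0 \<le> w x y"
    and hFnn: "\<forall>v. 0 \<le> hF v" and hBnn: "\<forall>v. 0 \<le> hB v"
    and admF: "\<forall>v. ereal (hF v) \<le> cheapest E w v goal"
    and admB: "\<forall>v. ereal (hB v) \<le> cheapest E w start v"
    and consF: "\<forall>x y. ereal (hF x) \<le> cheapest E w x y + ereal (hF y)"
    and consB: "\<forall>x y. ereal (hB y) \<le> cheapest E w x y + ereal (hB x)"
    and W1: "1 \<le> W" and lamW: "lam \<le> W"
    and run: "(wbae_step E w hF hB W lam)\<^sup>*\<^sup>* (init start goal) s"
    and stop: "ub s \<le> LB hF hB W lam s"
    and sol: "ub s \<noteq> \<infinity>"
  shows "ub s \<le> ereal W * cheapest E w start goal"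
proof -
  have hF0: "hF goal \<le> 0" using admF[rule_format, of goal] cheapest_refl[of E w goal]
    by (metis ereal_less_eq(3) order_trans zero_ereal_def)
  have hB0: "hB start \<le> 0" using admB[rule_format, of start] cheapest_refl[of E w start]
    by (metis ereal_less_eq(3) order_trans zero_ereal_def)
  have cF: "hF x \<le> w x y + hF y" if "(x, y) \<in> E" for x y
  proof -
    have "ereal (hF x) \<le> cheapest E w x y + ereal (hF y)" using consF by blast
    also have "\<dots> \<le> ereal (w x y) + ereal (hF y)" using cheapest_edge[OF that] by (rule add_right_mono)
    finally show ?thesis by simp
  qed
  have cB: "hB y \<le> w x y + hB x" if "(x, y) \<in> E" for x y
  proof -
    have "ereal (hB y) \<le> cheapest E w x y + ereal (hB x)" using consB by blast
    also have "\<dots> \<le> ereal (w x y) + ereal (hB x)" using cheapest_edge[OF that] by (rule add_right_mono)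
    finally show ?thesis by simp
  qed
  have enn: "0 \<le> ecost w D n m" if "m \<in> succs E D n" for D n m
    using that wnn by (auto simp: succs_def ecost_def split: if_splits)
  have econs: "hD hF hB (\<not> D) m \<le> hD hF hB (\<not> D) n + ecost w D n m" if "m \<in> succs E D n" for D n m
    using that cF cB by (fastforce simp: succs_def ecost_def hD_def split: if_splits)
  have winv: "winv E w hF hB start goal s"
    using run
  proof (induction rule: rtranclp_induct)
    case base
    then show ?case using winv_init[of hF goal hB start E w, OF hF0 hB0] .
  next
    case (step y z)
    then obtain D n where "n \<in> opn y D" "z = expand E w D n y" by (auto simp: wbae_step_def)
    then show ?case using winv_expand[OF step.IH _ enn econs] by blast
  qed
  have pb: "ub s \<le> ereal (W * path_cost w p)" if "is_path E start p goal" for p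
    using main_bound[OF winv that wnn hFnn hBnn hF0 hB0 cF cB W1 lamW stop] .
  have Wpos: "0 < W" using W1 by simp
  show ?thesis
  proof (cases "ub s")
    case (real u)
    have "ereal (u / W) \<le> cheapest E w start goal"
      unfolding cheapest_def
    proof (rule Inf_greatest)
      fix x assume "x \<in> {ereal (path_cost w p) |p. is_path E start p goal}"
      then obtain p where p: "is_path E start p goal" "x = ereal (path_cost w p)" by blast
      have "u \<le> W * path_cost w p" using pb[OF p(1)] real by simp
      then have "u / W \<le> path_cost w p" using Wpos by (simp add: divide_le_eq mult.commute)
      then show "ereal (u / W) \<le> x" using p(2) by simp
    qed
    then have "ereal W * ereal (u / W) \<le> ereal W * cheapest E w start goal"
      by (rule ereal_mult_left_mono) (use Wpos in simp)
    then show ?thesis using real Wpos by simp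
  next
    case PInf then show ?thesis using sol by simp
  next
    case MInf then show ?thesis by simp
  qed
qed

end
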